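(* Let $m$ be an even positive integer. Then 1) $\Gamma_0(2)^+\begin{bmatrix}1&0\\0&m\end{bmatrix}\Gamma_0(2)=\bigcup_{\gamma\in M_1^m}\Gamma_0(2)^+\gamma$; 2) $\Gamma_0(2)^+\begin{bmatrix}m&0\\0&1\end{bmatrix}\Gamma_0(2)=\bigcup_{\gamma\in M_2^m}\Gamma_0(2)^+\gamma$; 3) $\Gamma_0(2)^+\begin{bmatrix}m&0\\0&1\end{bmatrix}\Gamma_0(2)^+=\Gamma_0(2)^+\begin{bmatrix}1&0\\0&m\end{bmatrix}\Gamma_0(2)^+=\bigcup_{\gamma\in M^m}\Gamma_0(2)^+\gamma$.
   Context: Matrices are elements of $GL_2^+(\mathbb{R})$ considered up to sign. $\Gamma_0(2)=\{\begin{bmatrix}a&b\\c&d\end{bmatrix}\in SL_2(\mathbb{Z}): c\equiv0 \pmod 2\}$, $w_2=2^{-1/2}\begin{bmatrix}0&-1\\2&0\end{bmatrix}$, and $\Gamma_0(2)^+=\Gamma_0(2)\cup\Gamma_0(2)w_2$ is the group generated by $\Gamma_0(2)$ and $w_2$. For a positive integer $m$: $M_1^m=\{\begin{bmatrix}x&y\\0&z\end{bmatrix}: x,y,z\in\mathbb{Z},\ xz=m,\ 0\leq y<z,\ \gcd(x,y,z)=1,\ x\text{ odd}\}$; $S_1^m=\{\begin{bmatrix}x&y\\0&z\end{bmatrix}: xz=m,\ 0\leq y<z,\ \gcd(x,y,z)=1,\ z\text{ odd}\}$; $S_2^m=\{2^{-1/2}\begin{bmatrix}x&y\\0&z\end{bmatrix}: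 xz=2m,\ 0\leq y<z,\ \gcd(x,y,z)=1,\ x,z\text{ even}\}$; $M_2^m=S_1^m\cup S_2^m$, $M^m=M_1^m\cup M_2^m$ (integers $x,y,z$, $x,z>0$). *)

theory Defs
  imports "HOL-Analysis.Analysis"
begin

definition mat2 :: "real \<Rightarrow> real \<Rightarrow> real \<Rightarrow> real \<Rightarrow> real^2^2" where
  "mat2 a b c d = vector [vector [a, b], vector [c, d]]"

definition Gamma0_2 :: "(real^2^2) set" where
  "Gamma0_2 = {mat2 (of_int a) (of_int b) (of_int c) (of_int d) | a b c d :: int.
                  a * d - b * c = 1 \<and> even c}"

definition w2 :: "real^2^2" where
  "w2 = (1 / sqrt 2) *\<^sub>R mat2 0 (-1) 2 0"

definition Gamma0_2_plus :: "(real^2^2) set" where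
  "Gamma0_2_plus = Gamma0_2 \<union> {g ** w2 | g. g \<in> Gamma0_2}"

definition right_coset :: "(real^2^2) set \<Rightarrow> real^2^2 \<Rightarrow> (real^2^2) set" where
  "right_coset G a = {g ** a | g. g \<in> G}"

definition double_coset :: "(real^2^2) set \<Rightarrow> real^2^2 \<Rightarrow> (real^2^2) set \<Rightarrow> (real^2^2) set" where
  "double_coset G a H = {g ** a ** h | g h. g \<in> G \<and> h \<in> H}"

definition M1 :: "int \<Rightarrow> (real^2^2) set" where
  "M1 m = {mat2 (of_int x) (of_int y) 0 (of_int z) | x y z :: int.
             x > 0 \<and> z > 0 \<and> x * z = m \<and> 0 \<le> y \<and> y < z \<and> gcd (gcd x y) z = 1 \<and> odd x}"

definition S1 :: "int \<Rightarrow> (real^2^2) set" where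
  "S1 m = {mat2 (of_int x) (of_int y) 0 (of_int z) | x y z :: int.
             x > 0 \<and> z > 0 \<and> x * z = m \<and> 0 \<le> y \<and> y < z \<and> gcd (gcd x y) z = 1 \<and> odd z}"

definition S2 :: "int \<Rightarrow> (real^2^2) set" where
  "S2 m = {(1 / sqrt 2) *\<^sub>R mat2 (of_int x) (of_int y) 0 (of_int z) | x y z :: int.
             x > 0 \<and> z > 0 \<and> x * z = 2 * m \<and> 0 \<le> y \<and> y < z \<and> gcd (gcd x y) z = 1
             \<and> even x \<and> even z}"

definition M2 :: "int \<Rightarrow> (real^2^2) set" where
  "M2 m = S1 m \<union> S2 m"

definition Mm :: "int \<Rightarrow> (real^2^2) set" where
  "Mm m = M1 m \<union> M2 m"

end

theory Submission
  imports Defs "HOL-Computational_Algebra.Primes"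
begin

type_synonym im = "int \<times> int \<times> int \<times> int"

fun imul :: "im \<Rightarrow> im \<Rightarrow> im" where
  "imul (a,b,c,d) (a',b',c',d') = (a * a'+b * c', a * b'+b * d', c * a'+d * c', c * b'+d * d')"

fun iadj :: "im \<Rightarrow> im" where
  "iadj (a,b,c,d) = (d,-b,-c,a)"

fun inG :: "im \<Rightarrow> bool" where
  "inG (a,b,c,d) = (a * d-b * c = 1 \<and> even c)"

fun idet :: "im \<Rightarrow> int" where
  "idet (a,b,c,d) = a * d-b * c"

fun prim :: "im \<Rightarrow> bool" where
  "prim (a,b,c,d) = (\<forall>k. k dvd a \<longrightarrow> k dvd b \<longrightarrow> k dvd c \<longrightarrow> k dvd d \<longrightarrow> is_unit k)"

lemma imul_assoc: "imul (imul A B) C = imul A (imul B C)"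
  by (cases A rule: prod_cases4; cases B rule: prod_cases4; cases C rule: prod_cases4) (simp add: algebra_simps)

lemma idet_mul: "idet (imul A B) = idet A * idet B"
  by (cases A rule: prod_cases4; cases B rule: prod_cases4) (simp add: algebra_simps)

lemma inG_mul: "inG g \<Longrightarrow> inG h \<Longrightarrow> inG (imul g h)"
proof (cases g rule: prod_cases4; cases h rule: prod_cases4)
  fix a b c d a' b' c' d'
  assume g: "g = (a,b,c,d)" and h: "h = (a',b',c',d')" and G: "inG g" "inG h"
  have "idet (imul g h) = 1" using idet_mul[of g h] G g h by simp
  moreover have "even (c * a'+d * c')" using G g h by simp
  ultimately show "inG (imul g h)" using g h by simp
qed

lemma inG_det: "inG g \<Longrightarrow> idet g = 1"
  by (cases g rule: prod_cases4) simp

lemma inG_adj: "inG g \<Longrightarrow> inG (iadj g)"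
  by (cases g rule: prod_cases4) (simp add: algebra_simps)

lemma adj_mul_left: assumes "idet g = 1" shows "imul (iadj g) (imul g X) = X"
proof -
  obtain a b c d where g: "g=(a,b,c,d)" by (cases g rule: prod_cases4)
  obtain x y z w where X: "X=(x,y,z,w)" by (cases X rule: prod_cases4)
  have e: "a * d-b * c=1" using assms g by simp
  have "d * (a * x+b * z) + -b * (c * x+d * z) = x" "d * (a * y+b * w) + -b * (c * y+d * w) = y"
       "-c * (a * x+b * z) + a * (c * x+d * z) = z" "-c * (a * y+b * w) + a * (c * y+d * w) = w"
    using e by algebra+
  then show ?thesis by (simp add: g X)
qed

lemma adj_mul_right: assumes "idet h = 1" shows "imul (imul X h) (iadj h) = X"
proof -
  obtain a b c d where g: "h=(a,b,c,d)" by (cases h rule: prod_cases4)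
  obtain x y z w where X: "X=(x,y,z,w)" by (cases X rule: prod_cases4)
  have e: "a * d-b * c=1" using assms g by simp
  have "(x * a+y * c) * d + (x * b+y * d) * (-c) = x" "(x * a+y * c) * (-b) + (x * b+y * d) * a = y"
       "(z * a+w * c) * d + (z * b+w * d) * (-c) = z" "(z * a+w * c) * (-b) + (z * b+w * d) * a = w"
    using e by algebra+
  then show ?thesis by (simp add: g X)
qed

lemma adj_adj: "iadj (iadj X) = X"
  by (cases X rule: prod_cases4) simp

lemma adj_imul: "iadj (imul X Y) = imul (iadj Y) (iadj X)"
  by (cases X rule: prod_cases4; cases Y rule: prod_cases4) (simp add: algebra_simps)

lemma prim_left: assumes det: "idet g = 1" and pr: "prim A" shows "prim (imul g A)"
proof -
  obtain p q r s where g: "g=(p,q,r,s)" by (cases g rule: prod_cases4)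
  obtain a b c d where A: "A=(a,b,c,d)" by (cases A rule: prod_cases4)
  have e: "p * s-q * r = 1" using det g by simp
  show "prim (imul g A)"
    unfolding g A imul.simps prim.simps
  proof (intro allI impI)
    fix k assume k: "k dvd p * a+q * c" "k dvd p * b+q * d" "k dvd r * a+s * c" "k dvd r * b+s * d"
    have "a = s * (p * a+q * c) - q * (r * a+s * c)" using e by algebra
    then have ka: "k dvd a" using k by (metis dvd_diff dvd_mult)
    have "c = p * (r * a+s * c) - r * (p * a+q * c)" using e by algebra
    then have kc: "k dvd c" using k by (metis dvd_diff dvd_mult)
    have "b = s * (p * b+q * d) - q * (r * b+s * d)" using e by algebra
    then have kb: "k dvd b" using k by (metis dvd_diff dvd_mult)
    have "d = p * (r * b+s * d) - r * (p * b+q * d)" using e by algebra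
    then have kd: "k dvd d" using k by (metis dvd_diff dvd_mult)
    show "is_unit k" using pr A ka kb kc kd by simp
  qed
qed

lemma coprime_shift:
  fixes a b n :: int
  assumes g: "\<And>k. k dvd a \<Longrightarrow> k dvd b \<Longrightarrow> k dvd n \<Longrightarrow> is_unit k" and n: "n \<noteq> 0"
  shows "\<exists>t. coprime (a * t+b) n"
proof -
  define P where "P = {p \<in> prime_factors n. \<not> p dvd b}"
  define t where "t = \<Prod>P"
  have fin: "finite P" by (simp add: P_def)
  have "coprime (a * t+b) n"
  proof (rule ccontr)
    assume nc: "\<not> coprime (a * t+b) n"
    have "gcd (a * t+b) n \<noteq> 0" using n by simp
    moreover have "\<not> is_unit (gcd (a * t+b) n)" using nc by (simp add: coprime_iff_gcd_eq_1)
    ultimately obtain p where p: "prime p" "p dvd gcd (a * t+b) n" using prime_divisor_exists by blast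
    have p2: "p dvd a * t+b" "p dvd n" using p(2) by auto
    have pn: "p \<in> prime_factors n" using p(1) p2 n by (simp add: in_prime_factors_iff)
    show False
    proof (cases "p dvd b")
      case True
      then have "p dvd a * t" using p2(1) by (simp add: dvd_add_left_iff)
      then have "p dvd a \<or> p dvd t" using p(1) prime_dvd_mult_iff by blast
      then show False
      proof
        assume "p dvd a" then show False using g True p2(2) p(1) not_prime_unit by blast
      next
        assume "p dvd t"
        then obtain q where q: "q \<in> P" "p dvd q" using prime_dvd_prod_iff[OF fin p(1)] t_def by auto
        have "prime q" using q(1) by (auto simp: P_def in_prime_factors_iff)
        then have "p = q" using primes_dvd_imp_eq p(1) q(2) by blast
        then show False using q(1) True by (simp add: P_def)
      qed
    next
      case False
      then have "p \<in> P" using pn by (simp add: P_def)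
      then have "p dvd t" unfolding t_def using dvd_prodI[OF fin, of p "\<lambda>x. x"] by simp
      then have "p dvd a * t" by simp
      then have "p dvd b" using p2(1) by (simp add: dvd_add_right_iff)
      then show False using False by simp
    qed
  qed
  then show ?thesis by blast
qed

lemma gcd_dec:
  fixes a c :: int assumes "a \<noteq> 0 \<or> c \<noteq> 0"
  obtains e a1 c1 u v where "e = gcd a c" "e > 0" "a = a1 * e" "c = c1 * e" "u * a1 + v * c1 = 1"
proof -
  define e where "e = gcd a c"
  have e0: "e > 0" using assms by (simp add: e_def)
  have "a = (a div e) * e" "c = (c div e) * e" by (simp_all add: e_def)
  moreover have "coprime (a div e) (c div e)" using div_gcd_coprime[OF assms] by (simp add: e_def)
  then obtain u v where "u * (a div e) + v * (c div e) = 1"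
    using bezout_int[of "a div e" "c div e"] by (auto simp: coprime_iff_gcd_eq_1)
  ultimately show ?thesis using that e0 e_def by blast
qed

lemma red_step: "(z::int) > 0 \<Longrightarrow> imul (1, -(y0 div z), 0, 1) (x, y0, 0, z) = (x, y0 mod z, 0, z)"
  by (simp add: minus_div_mult_eq_mod[symmetric] algebra_simps)

lemma inG_upper: "inG (1, k, 0, 1)" by simp

lemma prim_gcd: "prim (x,y,0,z) \<Longrightarrow> gcd (gcd x y) z = 1"
proof -
  assume p: "prim (x,y,0,z)"
  have "is_unit (gcd (gcd x y) z)" using p unfolding prim.simps
    by (meson dvd_0_right dvd_trans gcd_dvd1 gcd_dvd2)
  then show ?thesis by simp
qed

lemma LR1:
  fixes a b c d m :: int
  assumes det: "a * d - b * c = m" and m: "m > 0" and oa: "odd a" and ec: "even c" and pr: "prim (a,b,c,d)"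
  shows "\<exists>g x y z. inG g \<and> imul g (a,b,c,d) = (x,y,0,z) \<and> x>0 \<and> z>0 \<and> x * z = m \<and> 0 \<le> y \<and> y < z
           \<and> gcd (gcd x y) z = 1 \<and> odd x"
proof -
  have "a \<noteq> 0 \<or> c \<noteq> 0" using oa by auto
  then obtain e a1 c1 u v where e: "e = gcd a c" "e > 0" "a = a1 * e" "c = c1 * e" "u * a1 + v * c1 = 1"
    using gcd_dec by blast
  have oe: "odd e" using oa e(3) by auto
  have ec1: "even c1" using ec oe e(4) by auto
  define g1 where "g1 = (u, v, -c1, a1)"
  have g1G: "inG g1" using e(5) ec1 by (simp add: g1_def algebra_simps)
  define y0 where "y0 = u * b+v * d"
  define z0 where "z0 = -c1 * b+a1 * d"
  have x0: "u * a+v * c = e" using e(3,4,5) by algebra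
  have l0: "-c1 * a + a1 * c = 0" using e(3,4) by algebra
  have ez: "e * z0 = m" using det unfolding e(3,4) z0_def by (simp add: algebra_simps)
  have z0p: "z0 > 0" using ez e(2) m zero_less_mult_pos by metis
  have gA: "imul g1 (a,b,c,d) = (e, y0, 0, z0)"
    using x0 l0 by (simp add: g1_def y0_def z0_def)
  define g where "g = imul (1, -(y0 div z0), 0, 1) g1"
  have gG: "inG g" unfolding g_def by (rule inG_mul[OF inG_upper g1G])
  have gA2: "imul g (a,b,c,d) = (e, y0 mod z0, 0, z0)"
    unfolding g_def imul_assoc gA using red_step[OF z0p] by simp
  have "prim (imul g (a,b,c,d))" using prim_left[OF inG_det[OF gG] pr] .
  then have "gcd (gcd e (y0 mod z0)) z0 = 1" using gA2 prim_gcd by simp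
  then show ?thesis using gG gA2 e(2) z0p ez oe
    by (intro exI[of _ g] exI[of _ e] exI[of _ "y0 mod z0"] exI[of _ z0]) simp
qed


lemma odd_dvd_2: fixes k t :: int assumes "odd k" "k dvd 2 * t" shows "k dvd t"
proof -
  have "coprime k 2" using assms(1) by (simp add: coprime_commute)
  then show ?thesis using assms(2) by (simp add: coprime_dvd_mult_right_iff)
qed

lemma LR2:
  fixes a b c d m :: int
  assumes det: "a * d - b * c = m" and m: "m > 0" and em: "even m" and ec: "even c" and od: "odd d"
    and pr: "prim (a,b,c,d)"
  shows "\<exists>g x y z. inG g \<and>
     ((imul g (a,b,c,d) = (x,y,0,z) \<and> x>0 \<and> z>0 \<and> x * z = m \<and> 0 \<le> y \<and> y < z
           \<and> gcd (gcd x y) z = 1 \<and> odd z) \<or>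
      (imul g (a,b,c,d) = (0, -(z div 2), x, y) \<and> x>0 \<and> z>0 \<and> x * z = 2 * m \<and> 0 \<le> y \<and> y < z
           \<and> gcd (gcd x y) z = 1 \<and> even x \<and> even z))"
proof -
  have "a \<noteq> 0 \<or> c \<noteq> 0" using det m by auto
  then obtain e a1 c1 u v where e: "e = gcd a c" "e > 0" "a = a1 * e" "c = c1 * e" "u * a1 + v * c1 = 1"
    using gcd_dec by blast
  have ea: "even a"
  proof -
    have "even (a * d)" using det em ec by (metis dvd_add even_mult_iff diff_add_cancel)
    then show ?thesis using od by simp
  qed
  show ?thesis
  proof (cases "even c1")
    case True
    define g1 where "g1 = (u, v, -c1, a1)"
    have g1G: "inG g1" using e(5) True by (simp add: g1_def algebra_simps)
    define y0 where "y0 = u * b+v * d"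
    define z0 where "z0 = -c1 * b+a1 * d"
    have x0: "u * a+v * c = e" using e(3,4,5) by algebra
    have l0: "-c1 * a + a1 * c = 0" using e(3,4) by algebra
    have ez: "e * z0 = m" using det unfolding e(3,4) z0_def by (simp add: algebra_simps)
    have z0p: "z0 > 0" using ez e(2) m zero_less_mult_pos by metis
    have oa1: "odd a1" using e(5) True by (metis even_add even_mult_iff odd_one)
    have oz: "odd z0" using oa1 od True unfolding z0_def by simp
    have gA: "imul g1 (a,b,c,d) = (e, y0, 0, z0)"
      using x0 l0 by (simp add: g1_def y0_def z0_def)
    define g where "g = imul (1, -(y0 div z0), 0, 1) g1"
    have gG: "inG g" unfolding g_def by (rule inG_mul[OF inG_upper g1G])
    have gA2: "imul g (a,b,c,d) = (e, y0 mod z0, 0, z0)"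
      unfolding g_def imul_assoc gA using red_step[OF z0p] by simp
    have "prim (imul g (a,b,c,d))" using prim_left[OF inG_det[OF gG] pr] .
    then have "gcd (gcd e (y0 mod z0)) z0 = 1" using gA2 prim_gcd by simp
    then show ?thesis using gG gA2 e(2) z0p ez oz
      by (intro exI[of _ g] exI[of _ e] exI[of _ "y0 mod z0"] exI[of _ z0]) simp
  next
    case False
    obtain u' v' where uv: "u' * a1 + v' * c1 = 1" "even u'"
    proof (cases "even u")
      case True then show ?thesis using that e(5) by blast
    next
      case False
      have "(u+c1) * a1 + (v-a1) * c1 = 1" using e(5) by algebra
      moreover have "even (u+c1)" using False \<open>odd c1\<close> by simp
      ultimately show ?thesis using that by blast
    qed
    have ov: "odd v'" using uv by (metis even_add even_mult_iff odd_one)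
    define g1 where "g1 = (c1, -a1, u', v')"
    have g1G: "inG g1" using uv by (simp add: g1_def algebra_simps)
    define b1 where "b1 = c1 * b - a1 * d"
    define d1 where "d1 = u' * b + v' * d"
    have l0: "c1 * a - a1 * c = 0" using e(3,4) by algebra
    have x0: "u' * a+v' * c = e" using e(3,4) uv(1) by algebra
    have eb: "-b1 * e = m" using det unfolding e(3,4) b1_def by (simp add: algebra_simps)
    have gA: "imul g1 (a,b,c,d) = (0, b1, e, d1)"
      using x0 l0 by (simp add: g1_def b1_def d1_def algebra_simps)
    define z where "z = -2 * b1"
    have mb: "-b1 > 0" using eb e(2) m zero_less_mult_pos by (metis mult.commute)
    have zp: "z > 0" using mb by (simp add: z_def)
    have zd: "z div 2 = -b1" by (simp add: z_def)
    have ee: "even e" using ea ec e(1) by simp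
    have od1: "odd d1" using uv(2) ov od by (simp add: d1_def)
    define k where "k = d1 div z"
    have red: "imul (1,0,2 * k,1) (0, b1, e, d1) = (0, b1, e, d1 mod z)"
    proof -
      have "2 * k * b1 + d1 = d1 - k * z" by (simp add: z_def algebra_simps)
      also have "\<dots> = d1 mod z" by (simp add: k_def minus_div_mult_eq_mod)
      finally show ?thesis by simp
    qed
    define g where "g = imul (1,0,2 * k,1) g1"
    have gG: "inG g" unfolding g_def by (rule inG_mul[OF _ g1G]) simp
    have gA2: "imul g (a,b,c,d) = (0, -(z div 2), e, d1 mod z)"
      unfolding g_def imul_assoc gA red zd by simp
    have prg: "prim (imul g (a,b,c,d))" using prim_left[OF inG_det[OF gG] pr] .
    have ez: "even z" by (simp add: z_def)
    have oy: "odd (d1 mod z)" using od1 ez by (simp add: minus_div_mult_eq_mod[symmetric])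
    have "gcd (gcd e (d1 mod z)) z = 1"
    proof -
      define k0 where "k0 = gcd (gcd e (d1 mod z)) z"
      have k1: "k0 dvd e" "k0 dvd (d1 mod z)" "k0 dvd z" unfolding k0_def
        by (meson dvd_trans gcd_dvd1 gcd_dvd2)+
      have "odd k0" using k1(2) oy by (metis dvd_trans)
      moreover have "k0 dvd 2 * (-b1)" using k1(3) by (simp add: z_def)
      ultimately have "k0 dvd -b1" using odd_dvd_2 by blast
      then have "k0 dvd -(z div 2)" using zd by simp
      then have "is_unit k0" using prg gA2 k1 by simp
      then show ?thesis unfolding k0_def by simp
    qed
    moreover have "e * z = 2 * m" using eb by (simp add: z_def algebra_simps)
    ultimately show ?thesis using gG gA2 e(2) zp ee ez
      by (intro exI[of _ g] exI[of _ e] exI[of _ "d1 mod z"] exI[of _ z]) simp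
  qed
qed


lemma SM_UT:
  fixes x y z :: int
  assumes xp: "x>0" and zp: "z>0" and ox: "odd x" and ez: "even z" and gg: "gcd (gcd x y) z = 1"
  shows "\<exists>g h. inG g \<and> inG h \<and> (x,y,0,z) = imul (imul g (1,0,0,x * z)) h"
proof -
  have "\<exists>t. coprime (x * t+2 * y) z"
  proof (rule coprime_shift)
    fix k assume k: "k dvd x" "k dvd 2 * y" "k dvd z"
    have "odd k" using k(1) ox by (metis dvd_trans)
    then have "k dvd y" using k(2) odd_dvd_2 by blast
    then have "k dvd gcd (gcd x y) z" using k by simp
    then show "is_unit k" using gg by simp
  next
    show "z \<noteq> 0" using zp by simp
  qed
  then obtain t where ct: "coprime (x * t+2 * y) z" by blast
  define u where "u = x * t+2 * y"
  have ou: "odd u"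
  proof
    assume "even u"
    then have "is_unit (2::int)" using coprime_common_divisor[of u z 2] ct ez by (simp add: u_def)
    then show False by simp
  qed
  have ot: "odd t" using ou by (simp add: u_def)
  have cu: "coprime u (2 * z)" using ct ou by (simp add: u_def coprime_commute)
  obtain al be where ab: "al * u + be * (2 * z) = 1"
    using bezout_int[of u "2 * z"] cu by (auto simp: coprime_iff_gcd_eq_1)
  define t1 where "t1 = (t-1) div 2"
  have t1: "2 * t1 = t-1" using ot by (simp add: t1_def)
  define h1 where "h1 = (t, t1, 2::int, 1::int)"
  have h1G: "inG h1" using t1 by (simp add: h1_def algebra_simps)
  define b' where "b' = x * t1+y"
  define s where "s = al * b' + be * z"
  define g1 where "g1 = (al, be, -(2 * z), u)"
  have g1G: "inG g1" using ab by (simp add: g1_def algebra_simps)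
  have B: "imul (x,y,0,z) h1 = (u, b', 2 * z, z)" by (simp add: h1_def u_def b'_def algebra_simps)
  have last: "-(2 * z) * b' + u * z = x * z"
  proof -
    have "-(2 * z) * b' + u * z = z * (x * t - x * (2 * t1))" by (simp add: b'_def u_def algebra_simps)
    also have "\<dots> = x * z" using t1 by algebra
    finally show ?thesis .
  qed
  have gB: "imul g1 (u, b', 2 * z, z) = (1, s, 0, x * z)"
    using ab last by (simp add: g1_def s_def algebra_simps)
  define h2 where "h2 = (1::int, -s, 0::int, 1::int)"
  define H where "H = imul h1 h2"
  have HG: "inG H" unfolding H_def by (rule inG_mul[OF h1G]) (simp add: h2_def)
  have D: "imul (imul g1 (x,y,0,z)) H = (1,0,0,x * z)"
    unfolding H_def imul_assoc[symmetric]
    apply (subst imul_assoc) apply (subst B) apply (subst gB) by (simp add: h2_def)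
  have "(x,y,0,z) = imul (iadj g1) (imul g1 (x,y,0,z))" using adj_mul_left[OF inG_det[OF g1G]] by simp
  also have "\<dots> = imul (iadj g1) (imul (imul (imul g1 (x,y,0,z)) H) (iadj H))"
    using adj_mul_right[OF inG_det[OF HG]] by simp
  also have "\<dots> = imul (imul (iadj g1) (1,0,0,x * z)) (iadj H)" unfolding D by (simp only: imul_assoc)
  finally show ?thesis using inG_adj[OF g1G] inG_adj[OF HG] by blast
qed

lemma SM1:
  fixes a b c d m :: int
  assumes det: "a * d - b * c = m" and m: "m > 0" and em: "even m" and oa: "odd a" and ec: "even c"
    and pr: "prim (a,b,c,d)"
  shows "\<exists>g h. inG g \<and> inG h \<and> (a,b,c,d) = imul (imul g (1,0,0,m)) h"
proof -
  obtain g1 x y z where L: "inG g1" "imul g1 (a,b,c,d) = (x,y,0,z)" "x>0" "z>0" "x * z = m"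
      "0 \<le> y" "y < z" "gcd (gcd x y) z = 1" "odd x"
    using LR1[OF det m oa ec pr] by (elim exE conjE) (rule that, assumption+)
  have "even z" using L(5,9) em by auto
  then obtain g2 h where S: "inG g2" "inG h" "(x,y,0,z) = imul (imul g2 (1,0,0,m)) h"
    using SM_UT[OF L(3,4,9) _ L(8)] L(5) by blast
  have "(a,b,c,d) = imul (iadj g1) (imul g1 (a,b,c,d))" using adj_mul_left[OF inG_det[OF L(1)]] by simp
  also have "\<dots> = imul (imul (imul (iadj g1) g2) (1,0,0,m)) h" unfolding L(2) S(3) imul_assoc ..
  finally show ?thesis using inG_mul[OF inG_adj[OF L(1)] S(1)] S(2) by blast
qed

lemma SM2:
  fixes a b c d m :: int
  assumes det: "a * d - b * c = m" and m: "m > 0" and em: "even m" and ec: "even c" and od: "odd d"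
    and pr: "prim (a,b,c,d)"
  shows "\<exists>g h. inG g \<and> inG h \<and> (a,b,c,d) = imul (imul g (m,0,0,1)) h"
proof -
  have pr': "prim (d,-b,-c,a)" using pr by simp
  obtain g h where S: "inG g" "inG h" "(d,-b,-c,a) = imul (imul g (1,0,0,m)) h"
    using SM1[of d a "-b" "-c" m] det m em od ec pr' by (auto simp: algebra_simps)
  have "(a,b,c,d) = iadj (d,-b,-c,a)" by simp
  also have "\<dots> = imul (imul (iadj h) (m,0,0,1)) (iadj g)"
    unfolding S(3) adj_imul imul_assoc by simp
  finally show ?thesis using inG_adj S by blast
qed


lemma mat2_mult: "mat2 a b c d ** mat2 a' b' c' d' = mat2 (a * a'+b * c') (a * b'+b * d') (c * a'+d * c') (c * b'+d * d')"
  unfolding mat2_def by (simp add: vec_eq_iff forall_2 matrix_matrix_mult_def sum_2)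
lemma mat2_scale: "r *\<^sub>R mat2 a b c d = mat2 (r * a) (r * b) (r * c) (r * d)"
  unfolding mat2_def by (simp add: vec_eq_iff forall_2)
lemma mat2_eq: "mat2 a b c d = mat2 a' b' c' d' \<longleftrightarrow> a=a' \<and> b=b' \<and> c=c' \<and> d=d'"
  unfolding mat2_def by (auto simp add: vec_eq_iff forall_2)
lemma mat2_one: "mat2 1 0 0 1 = mat 1"
  unfolding mat2_def by (simp add: vec_eq_iff forall_2 mat_def)

fun R :: "im \<Rightarrow> real^2^2" where
  "R (a,b,c,d) = mat2 (of_int a) (of_int b) (of_int c) (of_int d)"

lemma R_mul: "R A ** R B = R (imul A B)"
  by (cases A rule: prod_cases4; cases B rule: prod_cases4) (simp add: mat2_mult)

lemma w2_mat: "w2 = mat2 0 (-1/sqrt 2) (2/sqrt 2) 0"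
  unfolding w2_def mat2_scale by simp

lemma w2w2: "w2 ** w2 = R(-1,0,0,-1)"
  unfolding w2_mat by (simp add: mat2_mult mat2_eq)

lemma R_one: "R (1,0,0,1) = mat 1" using mat2_one by simp

lemma conjw: assumes "inG (a,b,c,d)"
  shows "R(a,b,c,d) ** w2 = w2 ** R(d, -(c div 2), -2 * b, a)"
    and "w2 ** R(a,b,c,d) = R(d, -(c div 2), -2 * b, a) ** w2"
    and "inG (d, -(c div 2), -2 * b, a)"
proof -
  obtain c' where c: "c = 2 * c'" using assms by auto
  have e: "a * d-b * c = 1" using assms by simp
  show "R(a,b,c,d) ** w2 = w2 ** R(d, -(c div 2), -2 * b, a)"
    unfolding w2_mat c by (simp add: mat2_mult mat2_eq)
  show "w2 ** R(a,b,c,d) = R(d, -(c div 2), -2 * b, a) ** w2"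
    unfolding w2_mat c by (simp add: mat2_mult mat2_eq)
  show "inG (d, -(c div 2), -2 * b, a)" using e unfolding c by (simp add: algebra_simps)
qed

lemma G_iff: "g \<in> Gamma0_2 \<longleftrightarrow> (\<exists>A. inG A \<and> g = R A)"
proof
  assume "g \<in> Gamma0_2"
  then obtain a b c d where "g = R (a,b,c,d)" "inG (a,b,c,d)" unfolding Gamma0_2_def by auto
  then show "\<exists>A. inG A \<and> g = R A" by blast
next
  assume "\<exists>A. inG A \<and> g = R A"
  then obtain a b c d where "g = R (a,b,c,d)" "inG (a,b,c,d)" by (metis prod_cases4)
  then show "g \<in> Gamma0_2" unfolding Gamma0_2_def by auto
qed

lemma Gp_iff: "g \<in> Gamma0_2_plus \<longleftrightarrow> (\<exists>A. inG A \<and> (g = R A \<or> g = R A ** w2))"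
proof
  assume "g \<in> Gamma0_2_plus"
  then have "g \<in> Gamma0_2 \<or> (\<exists>g'. g = g' ** w2 \<and> g' \<in> Gamma0_2)"
    unfolding Gamma0_2_plus_def by blast
  then show "\<exists>A. inG A \<and> (g = R A \<or> g = R A ** w2)"
  proof
    assume "g \<in> Gamma0_2" then obtain A where "inG A" "g = R A" using G_iff by blast
    then show ?thesis by blast
  next
    assume "\<exists>g'. g = g' ** w2 \<and> g' \<in> Gamma0_2"
    then obtain g' where g': "g = g' ** w2" "g' \<in> Gamma0_2" by blast
    then obtain A where "inG A" "g' = R A" using G_iff by blast
    then show ?thesis using g' by blast
  qed
next
  assume "\<exists>A. inG A \<and> (g = R A \<or> g = R A ** w2)"
  then obtain A where A: "inG A" "g = R A \<or> g = R A ** w2" by blast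
  have "R A \<in> Gamma0_2" using A(1) G_iff by blast
  then show "g \<in> Gamma0_2_plus" using A(2) unfolding Gamma0_2_plus_def by blast
qed

lemma G_Gp: "g \<in> Gamma0_2 \<Longrightarrow> g \<in> Gamma0_2_plus"
  unfolding Gamma0_2_plus_def by simp

lemma RG: "inG A \<Longrightarrow> R A \<in> Gamma0_2" using G_iff by blast
lemma RGp: "inG A \<Longrightarrow> R A \<in> Gamma0_2_plus" using G_iff G_Gp by blast
lemma RwGp: "inG A \<Longrightarrow> R A ** w2 \<in> Gamma0_2_plus" using Gp_iff by blast

lemma conj_ex: "inG A \<Longrightarrow> \<exists>B. inG B \<and> R A ** w2 = w2 ** R B \<and> w2 ** R A = R B ** w2"
  using conjw by (cases A rule: prod_cases4) blast

lemma Gp_mul: assumes "g \<in> Gamma0_2_plus" "h \<in> Gamma0_2_plus" shows "g ** h \<in> Gamma0_2_plus"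
proof -
  obtain A where A: "inG A" "g = R A \<or> g = R A ** w2" using assms(1) Gp_iff by blast
  obtain B where B: "inG B" "h = R B \<or> h = R B ** w2" using assms(2) Gp_iff by blast
  obtain B' where B': "inG B'" "w2 ** R B = R B' ** w2" using conj_ex[OF B(1)] by blast
  have mI: "inG (-1,0,0,-1)" by simp
  show ?thesis
  using A(2) B(2)
  proof (elim disjE)
    assume "g = R A" "h = R B" then show ?thesis using RGp[OF inG_mul[OF A(1) B(1)]] by (simp add: R_mul)
  next
    assume "g = R A" "h = R B ** w2" then show ?thesis
      using RwGp[OF inG_mul[OF A(1) B(1)]] by (simp add: R_mul matrix_mul_assoc)
  next
    assume "g = R A ** w2" "h = R B"
    then have "g ** h = R A ** (w2 ** R B)" by (simp add: matrix_mul_assoc)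
    also have "\<dots> = (R A ** R B') ** w2" using B'(2) by (simp add: matrix_mul_assoc)
    finally have "g ** h = R (imul A B') ** w2" by (simp add: R_mul)
    then show ?thesis using RwGp[OF inG_mul[OF A(1) B'(1)]] by simp
  next
    assume "g = R A ** w2" "h = R B ** w2"
    then have "g ** h = R A ** (w2 ** R B) ** w2" by (simp add: matrix_mul_assoc)
    also have "\<dots> = (R A ** R B') ** (w2 ** w2)" using B'(2) by (simp add: matrix_mul_assoc)
    also have "\<dots> = R (imul (imul A B') (-1,0,0,-1))" unfolding w2w2 R_mul ..
    finally show ?thesis using RGp[OF inG_mul[OF inG_mul[OF A(1) B'(1)] mI]] by simp
  qed
qed

lemma w2_Gp: "w2 \<in> Gamma0_2_plus"
  using RwGp[of "(1,0,0,1)"] by (simp add: mat2_one)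

lemma mI_Gp: "R(-1,0,0,-1) \<in> Gamma0_2_plus" using RGp[of "(-1,0,0,-1)"] by simp


lemma dc_eq:
  assumes c1: "\<And>\<gamma>. \<gamma> \<in> M \<Longrightarrow> \<exists>g\<in>Gamma0_2_plus. \<exists>h\<in>Gamma0_2. \<gamma> = g ** a ** h"
    and c2: "\<And>h. h \<in> Gamma0_2 \<Longrightarrow> \<exists>g\<in>Gamma0_2_plus. \<exists>\<gamma>\<in>M. a ** h = g ** \<gamma>"
  shows "double_coset Gamma0_2_plus a Gamma0_2 = (\<Union>\<gamma>\<in>M. right_coset Gamma0_2_plus \<gamma>)"
proof
  show "double_coset Gamma0_2_plus a Gamma0_2 \<subseteq> (\<Union>\<gamma>\<in>M. right_coset Gamma0_2_plus \<gamma>)"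
  proof
    fix X assume "X \<in> double_coset Gamma0_2_plus a Gamma0_2"
    then obtain g h where X: "X = g ** a ** h" "g \<in> Gamma0_2_plus" "h \<in> Gamma0_2"
      unfolding double_coset_def by blast
    obtain g' \<gamma> where g': "g' \<in> Gamma0_2_plus" "\<gamma> \<in> M" "a ** h = g' ** \<gamma>" using c2[OF X(3)] by blast
    have "X = (g ** g') ** \<gamma>" using X(1) g'(3) by (simp add: matrix_mul_assoc[symmetric])
    then have "X \<in> right_coset Gamma0_2_plus \<gamma>" unfolding right_coset_def using Gp_mul[OF X(2) g'(1)] by blast
    then show "X \<in> (\<Union>\<gamma>\<in>M. right_coset Gamma0_2_plus \<gamma>)" using g'(2) by blast
  qed
next
  show "(\<Union>\<gamma>\<in>M. right_coset Gamma0_2_plus \<gamma>) \<subseteq> double_coset Gamma0_2_plus a Gamma0_2"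
  proof
    fix X assume "X \<in> (\<Union>\<gamma>\<in>M. right_coset Gamma0_2_plus \<gamma>)"
    then obtain \<gamma> g where X: "\<gamma> \<in> M" "g \<in> Gamma0_2_plus" "X = g ** \<gamma>"
      unfolding right_coset_def by blast
    obtain g1 h1 where g1: "g1 \<in> Gamma0_2_plus" "h1 \<in> Gamma0_2" "\<gamma> = g1 ** a ** h1" using c1[OF X(1)] by blast
    have "X = (g ** g1) ** a ** h1" using X(3) g1(3) by (simp add: matrix_mul_assoc)
    then show "X \<in> double_coset Gamma0_2_plus a Gamma0_2"
      unfolding double_coset_def using Gp_mul[OF X(2) g1(1)] g1(2) by blast
  qed
qed

lemma dc_sub:
  assumes "a' = g0 ** a ** h0" "g0 \<in> Gamma0_2_plus" "h0 \<in> Gamma0_2_plus"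
  shows "double_coset Gamma0_2_plus a' Gamma0_2_plus \<subseteq> double_coset Gamma0_2_plus a Gamma0_2_plus"
proof
  fix X assume "X \<in> double_coset Gamma0_2_plus a' Gamma0_2_plus"
  then obtain g h where X: "X = g ** a' ** h" "g \<in> Gamma0_2_plus" "h \<in> Gamma0_2_plus"
    unfolding double_coset_def by blast
  have "X = (g ** g0) ** a ** (h0 ** h)" using X(1) assms(1) by (simp add: matrix_mul_assoc)
  then show "X \<in> double_coset Gamma0_2_plus a Gamma0_2_plus"
    unfolding double_coset_def using Gp_mul[OF X(2) assms(2)] Gp_mul[OF assms(3) X(3)] by blast
qed

lemma gcd_prim: assumes "gcd (gcd x y) z = (1::int)" shows "prim (x,y,0,z)"
  unfolding prim.simps
proof (intro allI impI)
  fix k :: int assume "k dvd x" "k dvd y" "k dvd 0" "k dvd z"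
  then have "k dvd gcd (gcd x y) z" by simp
  then show "is_unit k" using assms by simp
qed

lemma C1:
  assumes m: "m > 0" "even m" and g: "\<gamma> \<in> M1 m"
  shows "\<exists>g\<in>Gamma0_2_plus. \<exists>h\<in>Gamma0_2. \<gamma> = g ** mat2 1 0 0 (of_int m) ** h"
proof -
  obtain x y z where xyz: "\<gamma> = mat2 (of_int x) (of_int y) 0 (of_int z)" "x > 0" "z > 0" "x * z = m"
    "0 \<le> y" "y < z" "gcd (gcd x y) z = 1" "odd x"
    using g unfolding M1_def mem_Collect_eq by (elim exE conjE) (rule that, assumption+)
  obtain g h where gh: "inG g" "inG h" "(x,y,0,z) = imul (imul g (1,0,0,m)) h"
    using SM1[of x z y 0 m] xyz m gcd_prim[OF xyz(7)] by auto
  have "\<gamma> = R (x,y,0,z)" using xyz(1) by simp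
  also have "\<dots> = R g ** R (1,0,0,m) ** R h" unfolding gh(3) R_mul ..
  finally show ?thesis using RGp[OF gh(1)] RG[OF gh(2)] by auto
qed

lemma C2:
  assumes m: "m > 0" and h: "h \<in> Gamma0_2"
  shows "\<exists>g\<in>Gamma0_2_plus. \<exists>\<gamma>\<in>M1 m. mat2 1 0 0 (of_int m) ** h = g ** \<gamma>"
proof -
  obtain p q r s where h': "h = R (p,q,r,s)" "inG (p,q,r,s)" using h G_iff by (metis prod_cases4)
  have e: "p * s - q * r = 1" "even r" using h'(2) by auto
  have op: "odd p"
  proof -
    have "p * s = 1 + q * r" using e(1) by simp
    then have "odd (p * s)" using e(2) by simp
    then show ?thesis by simp
  qed
  have pr: "prim (p, q, m * r, m * s)"
  proof -
    have "\<And>k. k dvd p \<Longrightarrow> k dvd q \<Longrightarrow> is_unit k"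
    proof -
      fix k assume "k dvd p" "k dvd q"
      then have "k dvd p * s - q * r" by simp
      then show "is_unit k" using e(1) by simp
    qed
    then show ?thesis by simp
  qed
  have e2: "even (m * r)" using e(2) by simp
  have det: "p * (m * s) - q * (m * r) = m" using e(1) by (metis mult.commute mult.left_commute right_diff_distrib mult_1_right)
  obtain g1 x y z where L: "inG g1" "imul g1 (p,q,m * r,m * s) = (x,y,0,z)" "x>0" "z>0" "x * z = m"
      "0 \<le> y" "y < z" "gcd (gcd x y) z = 1" "odd x"
    using LR1[OF det m op e2 pr] by (elim exE conjE) (rule that, assumption+)
  have "mat2 1 0 0 (of_int m) ** h = R (1,0,0,m) ** R (p,q,r,s)" using h' by simp
  also have "\<dots> = R (p,q,m * r,m * s)" unfolding R_mul by simp
  also have "\<dots> = R (imul (iadj g1) (imul g1 (p,q,m * r,m * s)))" using adj_mul_left[OF inG_det[OF L(1)]] by simp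
  also have "\<dots> = R (iadj g1) ** R (x,y,0,z)" unfolding L(2) R_mul ..
  finally have eq: "mat2 1 0 0 (of_int m) ** h = R (iadj g1) ** R (x,y,0,z)" .
  have "R (x,y,0,z) \<in> M1 m" unfolding M1_def using L by force
  then show ?thesis using eq RGp[OF inG_adj[OF L(1)]] by blast
qed


lemma w2_S2: assumes "even z"
  shows "w2 ** ((1 / sqrt 2) *\<^sub>R mat2 (of_int x) (of_int y) 0 (of_int z)) = R (0, -(z div 2), x, y)"
proof -
  obtain z' where z: "z = 2 * z'" using assms by auto
  show ?thesis unfolding w2_mat mat2_scale z by (simp add: mat2_mult mat2_eq)
qed

lemma w2_back: "(R(-1,0,0,-1) ** w2) ** (w2 ** X) = X"
proof -
  have "(R(-1,0,0,-1) ** w2) ** (w2 ** X) = R(-1,0,0,-1) ** (w2 ** w2) ** X"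
    by (simp only: matrix_mul_assoc)
  also have "\<dots> = R (1,0,0,1) ** X" unfolding w2w2 R_mul by simp
  also have "\<dots> = X" unfolding R_one by simp
  finally show ?thesis .
qed

lemma C3:
  assumes m: "m > 0" "even m" and g: "\<gamma> \<in> M2 m"
  shows "\<exists>g\<in>Gamma0_2_plus. \<exists>h\<in>Gamma0_2. \<gamma> = g ** mat2 (of_int m) 0 0 1 ** h"
proof (cases "\<gamma> \<in> S1 m")
  case True
  obtain x y z where xyz: "\<gamma> = mat2 (of_int x) (of_int y) 0 (of_int z)" "x > 0" "z > 0" "x * z = m"
    "0 \<le> y" "y < z" "gcd (gcd x y) z = 1" "odd z"
    using True unfolding S1_def mem_Collect_eq by (elim exE conjE) (rule that, assumption+)
  obtain g h where gh: "inG g" "inG h" "(x,y,0,z) = imul (imul g (m,0,0,1)) h"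
    using SM2[of x z y 0 m] xyz m gcd_prim[OF xyz(7)] by auto
  have "\<gamma> = R (x,y,0,z)" using xyz(1) by simp
  also have "\<dots> = R g ** R (m,0,0,1) ** R h" unfolding gh(3) R_mul ..
  finally show ?thesis using RGp[OF gh(1)] RG[OF gh(2)] by auto
next
  case False
  then have "\<gamma> \<in> S2 m" using g unfolding M2_def by blast
  then obtain x y z where xyz: "\<gamma> = (1 / sqrt 2) *\<^sub>R mat2 (of_int x) (of_int y) 0 (of_int z)" "x > 0" "z > 0"
    "x * z = 2 * m" "0 \<le> y" "y < z" "gcd (gcd x y) z = 1" "even x" "even z"
    unfolding S2_def mem_Collect_eq by (elim exE conjE) (rule that, assumption+)
  obtain z' where z: "z = 2 * z'" using xyz(9) by auto
  have zd: "z div 2 = z'" using z by simp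
  have det: "0 * y - (-(z div 2)) * x = m" using xyz(4) unfolding zd z by (simp add: ac_simps)
  have oy: "odd y"
  proof
    assume "even y"
    then have "2 dvd gcd (gcd x y) z" using xyz(8,9) by simp
    then show False using xyz(7) by simp
  qed
  have pr: "prim (0, -(z div 2), x, y)"
    unfolding prim.simps
  proof (intro allI impI)
    fix k :: int assume k: "k dvd 0" "k dvd -(z div 2)" "k dvd x" "k dvd y"
    have "k dvd z" using k(2) unfolding zd z by simp
    then have "k dvd gcd (gcd x y) z" using k by simp
    then show "is_unit k" using xyz(7) by simp
  qed
  obtain g h where gh: "inG g" "inG h" "(0, -(z div 2), x, y) = imul (imul g (m,0,0,1)) h"
    using SM2[OF det m(1,2) xyz(8) oy pr] by blast
  have "\<gamma> = (R(-1,0,0,-1) ** w2) ** (w2 ** \<gamma>)" by (rule w2_back[symmetric])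
  also have "w2 ** \<gamma> = R (0, -(z div 2), x, y)" unfolding xyz(1) using w2_S2[OF xyz(9)] .
  also have "\<dots> = R g ** R (m,0,0,1) ** R h" unfolding gh(3) R_mul ..
  finally have "\<gamma> = ((R(-1,0,0,-1) ** w2) ** R g) ** R (m,0,0,1) ** R h" by (simp only: matrix_mul_assoc)
  moreover have "(R(-1,0,0,-1) ** w2) ** R g \<in> Gamma0_2_plus"
    using Gp_mul[OF Gp_mul[OF mI_Gp w2_Gp] RGp[OF gh(1)]] .
  ultimately show ?thesis using RG[OF gh(2)] by auto
qed

lemma C4:
  assumes m: "m > 0" "even m" and h: "h \<in> Gamma0_2"
  shows "\<exists>g\<in>Gamma0_2_plus. \<exists>\<gamma>\<in>M2 m. mat2 (of_int m) 0 0 1 ** h = g ** \<gamma>"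
proof -
  obtain p q r s where h': "h = R (p,q,r,s)" "inG (p,q,r,s)" using h G_iff by (metis prod_cases4)
  have e: "p * s - q * r = 1" "even r" using h'(2) by auto
  have os: "odd s"
  proof -
    have "p * s = 1 + q * r" using e(1) by simp
    then have "odd (p * s)" using e(2) by simp
    then show ?thesis by simp
  qed
  have pr: "prim (m * p, m * q, r, s)"
  proof -
    have "\<And>k. k dvd r \<Longrightarrow> k dvd s \<Longrightarrow> is_unit k"
    proof -
      fix k assume "k dvd r" "k dvd s"
      then have "k dvd p * s - q * r" by simp
      then show "is_unit k" using e(1) by simp
    qed
    then show ?thesis by simp
  qed
  have det: "(m * p) * s - (m * q) * r = m" using e(1) by (metis mult.commute mult.left_commute right_diff_distrib mult_1_right)
  define A where "A = (m * p, m * q, r, s)"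
  obtain g1 x y z where g1: "inG g1" and L:
     "(imul g1 A = (x,y,0,z) \<and> x>0 \<and> z>0 \<and> x * z = m \<and> 0 \<le> y \<and> y < z
           \<and> gcd (gcd x y) z = 1 \<and> odd z) \<or>
      (imul g1 A = (0, -(z div 2), x, y) \<and> x>0 \<and> z>0 \<and> x * z = 2 * m \<and> 0 \<le> y \<and> y < z
           \<and> gcd (gcd x y) z = 1 \<and> even x \<and> even z)"
    using LR2[OF det m(1,2) e(2) os pr, folded A_def] by (elim exE conjE) (rule that, assumption+)
  have "mat2 (of_int m) 0 0 1 ** h = R (m,0,0,1) ** R (p,q,r,s)" using h' by simp
  also have "\<dots> = R A" unfolding R_mul A_def by simp
  also have "\<dots> = R (imul (iadj g1) (imul g1 A))" using adj_mul_left[OF inG_det[OF g1]] by simp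
  also have "\<dots> = R (iadj g1) ** R (imul g1 A)" unfolding R_mul ..
  finally have eq: "mat2 (of_int m) 0 0 1 ** h = R (iadj g1) ** R (imul g1 A)" .
  show ?thesis
    using L
  proof (elim disjE conjE)
    assume L1: "imul g1 A = (x,y,0,z)" "x>0" "z>0" "x * z = m" "0 \<le> y" "y < z" "gcd (gcd x y) z = 1" "odd z"
    have "R (x,y,0,z) \<in> M2 m" unfolding M2_def S1_def using L1 by force
    then show ?thesis using eq L1(1) RGp[OF inG_adj[OF g1]] by auto
  next
    assume L2: "imul g1 A = (0, -(z div 2), x, y)" "x>0" "z>0" "x * z = 2 * m" "0 \<le> y" "y < z"
      "gcd (gcd x y) z = 1" "even x" "even z"
    define \<gamma> where "\<gamma> = (1 / sqrt 2) *\<^sub>R mat2 (of_int x) (of_int y) 0 (of_int z)"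
    have "\<gamma> \<in> S2 m" unfolding S2_def mem_Collect_eq \<gamma>_def
      by (intro exI[of _ x] exI[of _ y] exI[of _ z]) (use L2 in simp)
    then have "\<gamma> \<in> M2 m" unfolding M2_def by blast
    moreover have "mat2 (of_int m) 0 0 1 ** h = (R (iadj g1) ** w2) ** \<gamma>"
      unfolding eq L2(1) \<gamma>_def w2_S2[OF L2(9), symmetric] by (simp only: matrix_mul_assoc)
    ultimately show ?thesis using RwGp[OF inG_adj[OF g1]] by blast
  qed
qed


lemma Dw: "mat2 1 0 0 (of_int m) ** w2 = w2 ** mat2 (of_int m) 0 0 1"
  unfolding w2_mat by (simp add: mat2_mult mat2_eq)

lemma Dp_eq: "mat2 (of_int m) 0 0 1 = (R(-1,0,0,-1) ** w2) ** mat2 1 0 0 (of_int m) ** w2"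
  unfolding w2_mat by (simp add: mat2_mult mat2_eq)

lemma D_eq: "mat2 1 0 0 (of_int m) = w2 ** mat2 (of_int m) 0 0 1 ** (R(-1,0,0,-1) ** w2)"
  unfolding w2_mat by (simp add: mat2_mult mat2_eq)

lemma dc_split:
  "double_coset Gamma0_2_plus (mat2 1 0 0 (of_int m)) Gamma0_2_plus =
   double_coset Gamma0_2_plus (mat2 1 0 0 (of_int m)) Gamma0_2 \<union>
   double_coset Gamma0_2_plus (mat2 (of_int m) 0 0 1) Gamma0_2"
  (is "?L = ?A \<union> ?B")
proof
  show "?L \<subseteq> ?A \<union> ?B"
  proof
    fix X assume "X \<in> ?L"
    then obtain g h where X: "X = g ** mat2 1 0 0 (of_int m) ** h" "g \<in> Gamma0_2_plus" "h \<in> Gamma0_2_plus"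
      unfolding double_coset_def by blast
    obtain B where B: "inG B" "h = R B \<or> h = R B ** w2" using X(3) Gp_iff by blast
    show "X \<in> ?A \<union> ?B"
      using B(2)
    proof
      assume "h = R B" then show ?thesis using X RG[OF B(1)] unfolding double_coset_def by blast
    next
      assume hB: "h = R B ** w2"
      obtain B' where B': "inG B'" "R B ** w2 = w2 ** R B'" using conj_ex[OF B(1)] by blast
      have "X = g ** (mat2 1 0 0 (of_int m) ** w2) ** R B'" using X(1) hB B'(2) by (simp add: matrix_mul_assoc)
      also have "\<dots> = (g ** w2) ** mat2 (of_int m) 0 0 1 ** R B'" unfolding Dw by (simp add: matrix_mul_assoc)
      finally have "X \<in> ?B" unfolding double_coset_def using Gp_mul[OF X(2) w2_Gp] RG[OF B'(1)] by blast
      then show ?thesis by blast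
    qed
  qed
next
  show "?A \<union> ?B \<subseteq> ?L"
  proof
    fix X assume "X \<in> ?A \<union> ?B"
    then show "X \<in> ?L"
    proof
      assume "X \<in> ?A" then show ?thesis unfolding double_coset_def using G_Gp by blast
    next
      assume "X \<in> ?B"
      then obtain g h where X: "X = g ** mat2 (of_int m) 0 0 1 ** h" "g \<in> Gamma0_2_plus" "h \<in> Gamma0_2"
        unfolding double_coset_def by blast
      have "X = (g ** (R(-1,0,0,-1) ** w2)) ** mat2 1 0 0 (of_int m) ** (w2 ** h)"
        using X(1) Dp_eq[of m] by (simp add: matrix_mul_assoc)
      moreover have "g ** (R(-1,0,0,-1) ** w2) \<in> Gamma0_2_plus" using Gp_mul[OF X(2) Gp_mul[OF mI_Gp w2_Gp]] .
      moreover have "w2 ** h \<in> Gamma0_2_plus" using Gp_mul[OF w2_Gp G_Gp[OF X(3)]] .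
      ultimately show ?thesis unfolding double_coset_def by blast
    qed
  qed
qed

theorem proposition2p1:
  fixes m :: int
  assumes "m > 0" and "even m"
  shows "(double_coset Gamma0_2_plus (mat2 1 0 0 (of_int m)) Gamma0_2
           = (\<Union>\<gamma>\<in>M1 m. right_coset Gamma0_2_plus \<gamma>)) \<and>
         (double_coset Gamma0_2_plus (mat2 (of_int m) 0 0 1) Gamma0_2
           = (\<Union>\<gamma>\<in>M2 m. right_coset Gamma0_2_plus \<gamma>)) \<and>
         (double_coset Gamma0_2_plus (mat2 (of_int m) 0 0 1) Gamma0_2_plus
           = double_coset Gamma0_2_plus (mat2 1 0 0 (of_int m)) Gamma0_2_plus) \<and>
         (double_coset Gamma0_2_plus (mat2 1 0 0 (of_int m)) Gamma0_2_plus
           = (\<Union>\<gamma>\<in>Mm m. right_coset Gamma0_2_plus \<gamma>))"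
proof -
  have P1: "double_coset Gamma0_2_plus (mat2 1 0 0 (of_int m)) Gamma0_2
           = (\<Union>\<gamma>\<in>M1 m. right_coset Gamma0_2_plus \<gamma>)"
    by (rule dc_eq) (use C1[OF assms] C2[OF assms(1)] in auto)
  have P2: "double_coset Gamma0_2_plus (mat2 (of_int m) 0 0 1) Gamma0_2
           = (\<Union>\<gamma>\<in>M2 m. right_coset Gamma0_2_plus \<gamma>)"
    by (rule dc_eq) (use C3[OF assms] C4[OF assms] in auto)
  have mw: "R(-1,0,0,-1) ** w2 \<in> Gamma0_2_plus" using Gp_mul[OF mI_Gp w2_Gp] .
  have P3: "double_coset Gamma0_2_plus (mat2 (of_int m) 0 0 1) Gamma0_2_plus
           = double_coset Gamma0_2_plus (mat2 1 0 0 (of_int m)) Gamma0_2_plus"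
    using dc_sub[OF Dp_eq[of m] mw w2_Gp] dc_sub[OF D_eq[of m] w2_Gp mw] by blast
  have P4: "double_coset Gamma0_2_plus (mat2 1 0 0 (of_int m)) Gamma0_2_plus
           = (\<Union>\<gamma>\<in>Mm m. right_coset Gamma0_2_plus \<gamma>)"
    unfolding dc_split P1 P2 Mm_def by blast
  show ?thesis using P1 P2 P3 P4 by blast
qed

end
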